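(* For an integer $n \ge 3$ let $$f_n(x) = \frac{x^n-1}{(1-e^{2\pi i/n}x)(1-e^{-2\pi i/n}x)} = \frac{x^n-1}{1-2\cos(2\pi/n)\,x + x^2},$$ which is a polynomial of degree $n-2$ whose zeros are the $n$-th roots of unity other than $e^{\pm 2\pi i/n}$. Let $b_0 = 2.3565\ldots$ be the unique real root of $4\pi^2 + 2b + b^2 - 2b e^{b} = 0$. Then there exist constants $C>0$ and $n_0$ such that for every $n \ge n_0$ the derivative $f_n'$ has a zero $z_n$ with $$\left| z_n - \left(1 - \frac{b_0}{n}\right)\right| \le \frac{C}{n^2}.$$ That is, $f_n'$ has a zero within $O(1/n^2)$ of $1 - b_0/n$. *)

theory Defs
  imports "HOL-Analysis.Analysis" "HOL-Computational_Algebra.Polynomial"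
begin

text \<open>The polynomial f_n(x) = (x^n - 1) / (1 - 2 cos(2 pi/n) x + x^2) over the complex numbers;
  the division is exact polynomial division (the denominator divides x^n - 1 for n >= 3).\<close>
definition fpoly :: "nat \<Rightarrow> complex poly" where
  "fpoly n = (monom 1 n - 1) div [:1, - complex_of_real (2 * cos (2 * pi / real n)), 1:]"

end

theory Submission
  imports Defs "HOL-Real_Asymp.Real_Asymp"
begin

definition NN :: "nat \<Rightarrow> real \<Rightarrow> real" where
 "NN n x = real n * x ^ (n - 1) * (1 - 2 * cos (2*pi/real n) * x + x*x) - (x ^ n - 1) * (2 * x - 2 * cos (2*pi/real n))"

lemma two_roots_dvd:
  fixes p :: "complex poly"
  assumes "a \<noteq> b" "poly p a = 0" "poly p b = 0"
  shows "[:-a,1:] * [:-b,1:] dvd p"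
proof -
  from assms(2) have "[:-a,1:] dvd p" by (simp add: dvd_iff_poly_eq_0)
  then obtain r where r: "p = [:-a,1:] * r" by (auto elim: dvdE)
  from assms(3) have "(b - a) * poly r b = 0" by (auto simp: r)
  with assms(1) have "poly r b = 0" by simp
  then have "[:-b,1:] dvd r" by (simp add: dvd_iff_poly_eq_0)
  then show ?thesis by (metis r dvd_refl mult_dvd_mono)
qed

lemma Q_factor:
  fixes a :: real
  shows "[:1, - complex_of_real (2 * cos a), 1:] = [:- cis a, 1:] * [:- cis (-a), 1:]"
proof -
  have 1: "cis a * cis (-a) = 1" by (simp add: cis_mult)
  have 2: "cis a + cis (-a) = complex_of_real (2 * cos a)"
    by (simp add: complex_eq_iff)
  show ?thesis using 1 2 by (simp add: algebra_simps)
qed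

lemma fpoly_mult:
  assumes "n \<ge> 3"
  shows "fpoly n * [:1, - complex_of_real (2 * cos (2 * pi / real n)), 1:] = monom 1 n - 1"
proof -
  define a where "a = 2 * pi / real n"
  have npos: "real n > 0" using assms by simp
  have a0: "0 < a" "a < pi" using assms npos by (auto simp: a_def field_simps)
  have "cis a \<noteq> cis (-a)"
  proof
    assume "cis a = cis (-a)"
    then have "sin a = sin (-a)" by (metis cis.sel(2))
    then have "sin a = 0" by simp
    with sin_gt_zero[OF a0] show False by simp
  qed
  moreover have "poly (monom 1 n - 1) (cis a) = 0"
  proof -
    have "cis a ^ n = cis (2*pi)" unfolding Complex.DeMoivre a_def using npos by simp
    also have "\<dots> = 1" by simp
    finally show ?thesis by (simp add: poly_monom)
  qed
  moreover have "poly (monom 1 n - 1) (cis (-a)) = 0"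
  proof -
    have "cis (- a) ^ n = cis (- (2*pi))" unfolding Complex.DeMoivre a_def using npos by simp
    also have "\<dots> = 1" by (simp add: complex_eq_iff)
    finally show ?thesis by (simp add: poly_monom)
  qed
  ultimately have "[:1, - complex_of_real (2 * cos a), 1:] dvd monom 1 n - 1"
    unfolding Q_factor by (rule two_roots_dvd)
  then show ?thesis unfolding fpoly_def a_def by (rule dvd_div_mult_self)
qed

lemma NN_root:
  assumes "n \<ge> 3" "NN n x = 0"
  shows "poly (pderiv (fpoly n)) (complex_of_real x) = 0"
proof -
  define c where "c = cos (2 * pi / real n)"
  define Q where "Q = [:1, - complex_of_real (2 * c), 1:]"
  define z where "z = complex_of_real x"
  have npos: "real n > 0" using assms by simp
  have a0: "0 < 2 * pi / real n" "2 * pi / real n < pi" using assms npos by (auto simp: field_simps)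
  have "sin (2 * pi / real n) > 0" using sin_gt_zero[OF a0] .
  then have s2: "sin (2 * pi / real n) ^ 2 > 0" by simp
  have "c^2 = 1 - sin (2 * pi / real n) ^ 2" by (simp add: c_def cos_squared_eq)
  with s2 have "c^2 < 1" by linarith
  moreover have "1 - 2 * c * x + x * x = (x - c)^2 + (1 - c^2)"
    by (simp add: power2_eq_square algebra_simps)
  moreover have "(x - c)^2 \<ge> 0" by simp
  ultimately have qpos: "1 - 2 * c * x + x * x > 0" by linarith
  have Qz: "poly Q z = complex_of_real (1 - 2 * c * x + x * x)"
    by (simp add: Q_def z_def algebra_simps)
  have Qz0: "poly Q z \<noteq> 0" by (metis Qz of_real_eq_0_iff qpos less_irrefl)
  have m: "fpoly n * Q = monom 1 n - 1" using fpoly_mult[OF assms(1)] by (simp add: Q_def c_def)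
  have e1: "poly (fpoly n) z * poly Q z = z ^ n - 1"
    using arg_cong[OF m, of "\<lambda>p. poly p z"] by (simp add: poly_monom)
  have "pderiv (fpoly n * Q) = pderiv (monom 1 n - 1)" using m by simp
  then have "fpoly n * pderiv Q + Q * pderiv (fpoly n) = monom (of_nat n) (n - 1)"
    by (simp add: pderiv_mult pderiv_diff pderiv_monom)
  then have e2: "poly (fpoly n) z * poly (pderiv Q) z + poly Q z * poly (pderiv (fpoly n)) z = of_nat n * z ^ (n - 1)"
    by (metis (no_types, lifting) poly_add poly_mult poly_monom)
  have dQ: "poly (pderiv Q) z = 2 * z - 2 * complex_of_real c"
    by (simp add: Q_def pderiv_pCons)
  have "poly (pderiv (fpoly n)) z * (poly Q z)^2 = of_nat n * z ^ (n - 1) * poly Q z - (z ^ n - 1) * poly (pderiv Q) z"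
  proof -
    have "poly (pderiv (fpoly n)) z * (poly Q z)^2 = (poly (fpoly n) z * poly (pderiv Q) z + poly Q z * poly (pderiv (fpoly n)) z) * poly Q z - (poly (fpoly n) z * poly Q z) * poly (pderiv Q) z"
      by (simp add: power2_eq_square algebra_simps)
    then show ?thesis unfolding e1 e2 .
  qed
  also have "\<dots> = complex_of_real (NN n x)"
    unfolding Qz dQ by (simp add: NN_def z_def c_def)
  also have "\<dots> = 0" using assms by simp
  finally show ?thesis using Qz0 by (simp add: z_def)
qed

definition GG :: "real \<Rightarrow> real" where
 "GG t = t*t * exp (-t) + 4*(pi*pi)*exp(-t) + 2*t*(exp (-t) - 1)"

lemma L1p: assumes "b > 0" "c > 0" shows "((\<lambda>n::nat. real n * real n * NN n (1 - (b + c / real n) / real n) - real n * GG (b + c / real n)) \<longlongrightarrow>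
   exp(-b)*(-(b^4/2) - 2*pi^2*b^2) + 4*pi^2*(1-exp(-b))) at_top"
  unfolding NN_def GG_def
  using assms apply (real_asymp simp add: algebra_simps)
  apply (simp add: field_simps power2_eq_square eval_nat_numeral)
  done

lemma L1m: assumes "b > 0" "c < 0" shows "((\<lambda>n::nat. real n * real n * NN n (1 - (b + c / real n) / real n) - real n * GG (b + c / real n)) \<longlongrightarrow>
   exp(-b)*(-(b^4/2) - 2*pi^2*b^2) + 4*pi^2*(1-exp(-b))) at_top"
  unfolding NN_def GG_def
  using assms apply (real_asymp simp add: algebra_simps)
  apply (simp add: field_simps power2_eq_square eval_nat_numeral)
  done

lemma L2p: assumes "b > 0" "c > 0" shows "((\<lambda>n::nat. real n * (GG (b + c / real n) - GG b)) \<longlongrightarrow>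
   (exp(-b)*(2 - b^2 - 4*pi^2) - 2) * c) at_top"
  unfolding GG_def
  using assms apply real_asymp
  apply (simp add: field_simps power2_eq_square)
  done

lemma L2m: assumes "b > 0" "c < 0" shows "((\<lambda>n::nat. real n * (GG (b + c / real n) - GG b)) \<longlongrightarrow>
   (exp(-b)*(2 - b^2 - 4*pi^2) - 2) * c) at_top"
  unfolding GG_def
  using assms apply real_asymp
  apply (simp add: field_simps power2_eq_square)
  done


theorem proposition3p1:
  fixes b0 :: real
  assumes "4 * pi\<^sup>2 + 2 * b0 + b0\<^sup>2 - 2 * b0 * exp b0 = 0"
  shows "\<exists>C>0. \<exists>n0::nat. \<forall>n\<ge>n0. n \<ge> 3 \<longrightarrow>
           (\<exists>z::complex. poly (pderiv (fpoly n)) z = 0 \<and>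
              cmod (z - complex_of_real (1 - b0 / real n)) \<le> C / (real n)\<^sup>2)"
proof -
  have pi4: "4 * pi^2 = 2 * b0 * exp b0 - 2 * b0 - b0^2" using assms by linarith
  have bpos: "b0 > 0"
  proof (rule ccontr)
    assume "\<not> b0 > 0"
    then have "b0 * exp b0 \<le> 0" by (simp add: mult_nonpos_nonneg)
    moreover have "4 * pi^2 + 2 * b0 + b0^2 = (b0 + 1)^2 + (4*pi^2 - 1)"
      by (simp add: power2_eq_square algebra_simps)
    moreover have "pi^2 > 1" using pi_gt3 by (simp add: power2_eq_square) (smt (verit) mult_less_cancel_right1 pi_gt3)
    moreover have "(b0 + 1)^2 \<ge> 0" by simp
    ultimately show False using assms by linarith
  qed
  have eb: "exp (-b0) * exp b0 = 1" by (simp add: exp_minus field_simps)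
  have GG0: "GG b0 = 0"
  proof -
    have "GG b0 = exp (-b0) * (b0^2 + 4*pi^2 + 2*b0) - 2*b0"
      by (simp add: GG_def power2_eq_square algebra_simps)
    also have "\<dots> = exp (-b0) * exp b0 * (2*b0) - 2*b0" unfolding pi4 by (simp add: algebra_simps)
    also have "\<dots> = 0" using eb by simp
    finally show ?thesis .
  qed
  define D where "D = exp(-b0)*(2 - b0^2 - 4*pi^2) - 2"
  have "D = (2 + 2*b0) * (exp (-b0) - 1)"
  proof -
    have "D = exp(-b0)*(2 + 2*b0) - exp (-b0) * exp b0 * (2*b0) - 2"
      unfolding D_def pi4 by (simp add: algebra_simps)
    then show ?thesis unfolding eb by (simp add: algebra_simps)
  qed
  moreover have "exp (-b0) < 1" using bpos by simp
  ultimately have Dneg: "D < 0" using bpos by (simp add: mult_pos_neg)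
  define L where "L = exp(-b0)*(-(b0^4/2) - 2*pi^2*b0^2) + 4*pi^2*(1-exp(-b0))"
  define K where "K = (\<bar>L\<bar> + 1) / (- D)"
  have Kpos: "K > 0" using Dneg unfolding K_def by (intro divide_pos_pos) auto
  have DK: "D * K = - (\<bar>L\<bar> + 1)" using Dneg by (simp add: K_def field_simps)
  define Pp where "Pp = (\<lambda>n::nat. real n * real n * NN n (1 - (b0 + K / real n) / real n))"
  define Pm where "Pm = (\<lambda>n::nat. real n * real n * NN n (1 - (b0 + (-K) / real n) / real n))"
  have "((\<lambda>n::nat. (real n * real n * NN n (1 - (b0 + K / real n) / real n) - real n * GG (b0 + K / real n))
       + real n * (GG (b0 + K / real n) - GG b0)) \<longlongrightarrow> L + D * K) at_top"
    unfolding L_def D_def by (intro tendsto_add L1p L2p bpos Kpos)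
  also have "(\<lambda>n::nat. (real n * real n * NN n (1 - (b0 + K / real n) / real n) - real n * GG (b0 + K / real n))
       + real n * (GG (b0 + K / real n) - GG b0)) = Pp"
    by (rule ext) (simp add: Pp_def GG0 algebra_simps)
  finally have limp: "(Pp \<longlongrightarrow> L + D * K) at_top" .
  have "((\<lambda>n::nat. (real n * real n * NN n (1 - (b0 + (-K) / real n) / real n) - real n * GG (b0 + (-K) / real n))
       + real n * (GG (b0 + (-K) / real n) - GG b0)) \<longlongrightarrow> L + D * (-K)) at_top"
    unfolding L_def D_def using Kpos by (intro tendsto_add L1m L2m bpos) auto
  also have "(\<lambda>n::nat. (real n * real n * NN n (1 - (b0 + (-K) / real n) / real n) - real n * GG (b0 + (-K) / real n))
       + real n * (GG (b0 + (-K) / real n) - GG b0)) = Pm"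
    by (rule ext) (simp add: Pm_def GG0 algebra_simps)
  finally have limm: "(Pm \<longlongrightarrow> L + D * (-K)) at_top" .
  have "L + D * K < 0" using DK by linarith
  then have ev1: "eventually (\<lambda>n. Pp n < 0) at_top" using order_tendstoD(2)[OF limp] by blast
  have "L + D * (-K) > 0" using DK by linarith
  then have ev2: "eventually (\<lambda>n. Pm n > 0) at_top" using order_tendstoD(1)[OF limm] by blast
  from ev1 ev2 obtain N0 where N0: "\<And>n. n \<ge> N0 \<Longrightarrow> Pp n < 0 \<and> Pm n > 0"
    unfolding eventually_sequentially[symmetric] by (auto simp: eventually_sequentially) (metis (full_types) eventually_conj eventually_sequentially)
  show ?thesis
  proof (intro exI[of _ K] conjI Kpos exI[of _ N0] allI impI)
    fix n :: nat assume n: "n \<ge> N0" "n \<ge> 3"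
    have np: "real n > 0" using n by simp
    have nn: "real n * real n > 0" using np by simp
    define xp where "xp = 1 - (b0 + K / real n) / real n"
    define xm where "xm = 1 - (b0 + (-K) / real n) / real n"
    have xp': "xp = (1 - b0 / real n) - K / (real n)^2" using np by (simp add: xp_def field_simps power2_eq_square)
    have xm': "xm = (1 - b0 / real n) + K / (real n)^2" using np by (simp add: xm_def field_simps power2_eq_square)
    have "K / (real n)^2 > 0" using Kpos np by simp
    then have le: "xp \<le> xm" using xp' xm' by linarith
    have "NN n xp < 0"
    proof -
      have "real n * real n * NN n xp < 0" using N0[OF n(1)] by (simp add: Pp_def xp_def)
      then show ?thesis using nn by (simp add: mult_less_0_iff)
    qed
    moreover have "NN n xm > 0"
    proof -
      have "real n * real n * NN n xm > 0" using N0[OF n(1)] by (simp add: Pm_def xm_def)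
      then show ?thesis using nn by (simp add: zero_less_mult_iff)
    qed
    moreover have "continuous_on {xp..xm} (NN n)" unfolding NN_def by (intro continuous_intros)
    ultimately obtain x where x: "xp \<le> x" "x \<le> xm" "NN n x = 0"
      using IVT'[of "NN n" xp 0 xm] le by auto
    have "\<bar>x - (1 - b0 / real n)\<bar> \<le> K / (real n)^2" using x(1,2) xp' xm' by linarith
    moreover have "cmod (complex_of_real x - complex_of_real (1 - b0 / real n)) = \<bar>x - (1 - b0 / real n)\<bar>"
      by (metis norm_of_real of_real_diff)
    ultimately show "\<exists>z::complex. poly (pderiv (fpoly n)) z = 0 \<and>
              cmod (z - complex_of_real (1 - b0 / real n)) \<le> K / (real n)\<^sup>2"
      using NN_root[OF n(2) x(3)] by auto
  qed
qed
end
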